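(* Let functions $w_i,y_i$ ($i\in\mathcal{I}$), $z_j$ ($j\in\mathcal{J}$), $\psi_{ij}$ ($i\in\mathcal{I},j\in\mathcal{J}$, with $\psi_{ij}=0$ for $i\not\sim j$) be measurable and locally bounded on $[0,\infty)$ and satisfy $$\sum_{j\in\mathcal{J}}\mathfrak{T}_{\mu_{ij}}\psi_{ij}=w_i-\mathfrak{T}_{\theta_i}y_i,\quad i\in\mathcal{I},\qquad \sum_{i\in\mathcal{I}}\psi_{ij}=-z_j,\quad j\in\mathcal{J}.$$ (i) Then there are finite (possibly empty) sequences $A_i$ ($i\in\mathcal{I}$) and $B_j$ ($j\in\mathcal{J}$) with values in $\{\mu_{ij}:(i,j)\in\mathcal{E}\}$, such that, letting $A_i'$ denote the concatenation of $A_i$ with $\theta_i$, $$\sum_{i\in\mathcal{I}}\mathfrak{T}_{A_i}w_i-\sum_{i\in\mathcal{I}}\mathfrak{T}_{A_i'}y_i+\sum_{j\in\mathcal{J}}\mathfrak{T}_{B_j}z_j=0.$$ (ii) If $\mu_{ij}=\mu_j$ for $(i,j)\in\mathcal{E}$ and $\theta_i=0$ for $i\in\mathcal{I}$, then $\sum_{i\in\mathcal{I}}(w_i-y_i)+\sum_{j\in\mathcal{J}}\mathfrak{T}_{\mu_j}z_j=0$. (iii) If $\mu_{ij}=\mu_i$ for $(i,j)\in\mathcal{E}$ and $\theta_i=0$ for $i\in\mathcal{I}$, then $\sum_{i\in\mathcal{I}}\mathfrak{T}_{M_i}(w_i-y_i)+\mathfrak{T}_M(e\cdot z)=0$, where $M_i=(\mu_{i'})_{i'\in\mathcal{I},i'\ne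 i}$ and $M=(\mu_{i'})_{i'\in\mathcal{I}}$.
   Context: $\mathcal{I}=\{1,\dots,I\}$, $\mathcal{J}=\{I+1,\dots,I+J\}$, $\mathcal{E}\subset\mathcal{I}\times\mathcal{J}$, $i\sim j$ iff $(i,j)\in\mathcal{E}$; the bipartite graph $\mathcal{T}$ with vertices $\mathcal{I}\cup\mathcal{J}$ and edges $\mathcal{E}$ is a tree. Constants $\mu_{ij}>0$ for $(i,j)\in\mathcal{E}$, $\mu_{ij}=0$ otherwise, and $\theta_i\ge0$. For $f:[0,\infty)\to\mathbb{R}$ locally bounded measurable, $\mathfrak{J}f(t)=\int_0^tf(s)ds$ and, for $\alpha\in\mathbb{R}$, $\mathfrak{T}_\alpha f=f+\alpha\mathfrak{J}f$. For a finite real sequence $A=(\alpha_1,\dots,\alpha_k)$, $\mathfrak{T}_A=\mathfrak{T}_{\alpha_1}\circ\cdots\circ\mathfrak{T}_{\alpha_k}$ (identity if $A$ is empty). $e=(1,\dots,1)'$. *)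

theory Defs
  imports "HOL-Analysis.Analysis"
begin

definition undir :: "(nat \<times> nat) set \<Rightarrow> (nat \<times> nat) set" where
  "undir E = E \<union> E\<inverse>"

text \<open>A tree: nonempty vertex set, edges between vertices, connected, and acyclic
  (no edge lies on a cycle, i.e. removing any edge disconnects its endpoints).\<close>
definition is_tree :: "nat set \<Rightarrow> (nat \<times> nat) set \<Rightarrow> bool" where
  "is_tree V E \<longleftrightarrow> V \<noteq> {} \<and> E \<subseteq> V \<times> V
     \<and> (\<forall>u\<in>V. \<forall>v\<in>V. (u, v) \<in> (undir E)\<^sup>*)
     \<and> (\<forall>(a, b)\<in>E. (a, b) \<notin> (undir (E - {(a, b)}))\<^sup>*)"

definition Jop :: "(real \<Rightarrow> real) \<Rightarrow> real \<Rightarrow> real" where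
  "Jop f t = (LINT s:{0..t}|lborel. f s)"

definition Top :: "real \<Rightarrow> (real \<Rightarrow> real) \<Rightarrow> real \<Rightarrow> real" where
  "Top \<alpha> f t = f t + \<alpha> * Jop f t"

fun Tseq :: "real list \<Rightarrow> (real \<Rightarrow> real) \<Rightarrow> real \<Rightarrow> real" where
  "Tseq [] f = f"
| "Tseq (a # as) f = Top a (Tseq as f)"

definition meas_locbdd :: "(real \<Rightarrow> real) \<Rightarrow> bool" where
  "meas_locbdd f \<longleftrightarrow> set_borel_measurable lborel {0..} f
     \<and> (\<forall>T\<ge>0. \<exists>C. \<forall>t\<in>{0..T}. \<bar>f t\<bar> \<le> C)"

end

theory Submission imports Defs begin

definition LI :: "(real \<Rightarrow> real) \<Rightarrow> bool" where
  "LI f \<longleftrightarrow> (\<forall>t. set_integrable lborel {0..t} f)"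

lemma LI_const: "LI (\<lambda>_. c)"
  unfolding LI_def set_integrable_def
proof
  fix t :: real
  show "integrable lborel (\<lambda>x. indicator {0..t} x *\<^sub>R c)"
    by (rule borel_integrable_compact) auto
qed

lemma meas_locbdd_LI: assumes "meas_locbdd f" shows "LI f"
  unfolding LI_def
proof
  fix t :: real
  show "set_integrable lborel {0..t} f"
  proof (cases "t \<ge> 0")
    case True
    then obtain C where C: "\<forall>s\<in>{0..t}. \<bar>f s\<bar> \<le> C" using assms unfolding meas_locbdd_def by blast
    have m: "set_borel_measurable lborel {0..t} f"
      by (rule set_borel_measurable_subset[of _ "{0..}"]) (use assms in \<open>auto simp: meas_locbdd_def\<close>)
    show ?thesis
      by (rule set_integrable_bound[OF LI_const[of C, unfolded LI_def, rule_format, of t] m])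
         (use C in \<open>fastforce intro!: AE_I2\<close>)
  next
    case False
    then have "{0..t} = {}" by auto
    then show ?thesis by (simp add: set_integrable_def)
  qed
qed

lemma LI_add: "LI f \<Longrightarrow> LI g \<Longrightarrow> LI (\<lambda>s. f s + g s)"
  unfolding LI_def by auto

lemma LI_mult: "LI f \<Longrightarrow> LI (\<lambda>s. c * f s)"
  unfolding LI_def by auto

lemma LI_sum: "finite S \<Longrightarrow> (\<And>i. i \<in> S \<Longrightarrow> LI (f i)) \<Longrightarrow> LI (\<lambda>s. \<Sum>i\<in>S. f i s)"
  by (induction S rule: finite_induct) (auto intro!: LI_add simp: LI_const)

lemma Jop_add: "LI f \<Longrightarrow> LI g \<Longrightarrow> Jop (\<lambda>s. f s + g s) t = Jop f t + Jop g t"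
  unfolding LI_def Jop_def by (simp add: set_integral_add)

lemma Jop_mult: "Jop (\<lambda>s. c * f s) t = c * Jop f t"
  unfolding Jop_def by simp

lemma Jop_zero: "Jop (\<lambda>s. 0) t = 0"
  unfolding Jop_def by (simp add: set_lebesgue_integral_def)

lemma Jop_sum: "finite S \<Longrightarrow> (\<And>i. i \<in> S \<Longrightarrow> LI (f i)) \<Longrightarrow> Jop (\<lambda>s. \<Sum>i\<in>S. f i s) t = (\<Sum>i\<in>S. Jop (f i) t)"
proof (induction S rule: finite_induct)
  case empty then show ?case by (simp add: Jop_zero)
next
  case (insert x F)
  have "Jop (\<lambda>s. \<Sum>i\<in>insert x F. f i s) t = Jop (\<lambda>s. f x s + (\<Sum>i\<in>F. f i s)) t"
    using insert by simp
  also have "\<dots> = Jop (f x) t + Jop (\<lambda>s. \<Sum>i\<in>F. f i s) t"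
    using insert by (intro Jop_add LI_sum) auto
  finally show ?case using insert by simp
qed

lemma Jop_cong: "(\<And>s. s \<ge> 0 \<Longrightarrow> f s = g s) \<Longrightarrow> Jop f t = Jop g t"
  unfolding Jop_def by (rule set_lebesgue_integral_cong) auto

lemma LI_Jop: assumes "LI f" shows "LI (Jop f)"
  unfolding LI_def
proof
  fix T :: real
  show "set_integrable lborel {0..T} (Jop f)"
  proof (cases "T \<ge> 0")
    case True
    have fi: "f integrable_on {0..T}"
      using set_borel_integral_eq_integral(1) assms unfolding LI_def by blast
    have "continuous_on {0..T} (\<lambda>x. integral {0..x} f)"
      by (rule indefinite_integral_continuous_1[OF fi])
    moreover have "\<And>x. x \<in> {0..T} \<Longrightarrow> integral {0..x} f = Jop f x"
      unfolding Jop_def using set_borel_integral_eq_integral(2) assms unfolding LI_def by metis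
    ultimately have "continuous_on {0..T} (Jop f)"
      using continuous_on_cong[of "{0..T}" "{0..T}" "\<lambda>x. integral {0..x} f" "Jop f"] by blast
    then show ?thesis unfolding set_integrable_def
      by (intro borel_integrable_compact) auto
  next
    case False
    then have "{0..T} = {}" by auto
    then show ?thesis by (simp add: set_integrable_def)
  qed
qed


lemma LI_Top: "LI f \<Longrightarrow> LI (Top a f)"
  unfolding Top_def[abs_def] by (intro LI_add LI_mult LI_Jop)

lemma LI_Tseq: "LI f \<Longrightarrow> LI (Tseq xs f)"
  by (induction xs) (auto intro: LI_Top)

lemma Top_comm: assumes "LI f" shows "Top a (Top b f) = Top b (Top a f)"
proof
  fix t
  have J: "Jop (Top c f) t = Jop f t + c * Jop (Jop f) t" for c
    unfolding Top_def[abs_def] using assms LI_Jop LI_mult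
    by (simp add: Jop_add Jop_mult)
  show "Top a (Top b f) t = Top b (Top a f) t"
    unfolding Top_def[of a "Top b f"] Top_def[of b "Top a f"] J
    by (simp add: Top_def algebra_simps)
qed

lemma Tseq_append: "Tseq (xs @ ys) f = Tseq xs (Tseq ys f)"
  by (induction xs) auto

lemma Tseq_Top_comm: "LI f \<Longrightarrow> Tseq xs (Top a f) = Top a (Tseq xs f)"
proof (induction xs)
  case Nil then show ?case by simp
next
  case (Cons x xs)
  have "Tseq (x # xs) (Top a f) = Top x (Top a (Tseq xs f))" using Cons by simp
  also have "\<dots> = Top a (Top x (Tseq xs f))" using Top_comm[OF LI_Tseq[OF Cons.prems]] by blast
  finally show ?case by simp
qed

lemma Tseq_mset: "LI f \<Longrightarrow> mset xs = mset ys \<Longrightarrow> Tseq xs f = Tseq ys f"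
proof (induction xs arbitrary: ys)
  case Nil then show ?case by simp
next
  case (Cons a xs)
  then have "a \<in> set ys" by (metis list.set_intros(1) set_mset_mset)
  then obtain ys1 ys2 where ys: "ys = ys1 @ a # ys2" by (meson split_list)
  have "mset xs = mset (ys1 @ ys2)" using Cons.prems ys by simp
  then have "Tseq xs f = Tseq (ys1 @ ys2) f" using Cons by blast
  moreover have "Tseq ys f = Top a (Tseq (ys1 @ ys2) f)"
    unfolding ys Tseq_append using Tseq_Top_comm[OF LI_Tseq[OF Cons.prems(1)]] by simp
  ultimately show ?case by simp
qed

lemma Top_add: "LI f \<Longrightarrow> LI g \<Longrightarrow> Top a (\<lambda>s. f s + g s) = (\<lambda>s. Top a f s + Top a g s)"
  by (auto simp: Top_def Jop_add algebra_simps)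

lemma Top_mult: "Top a (\<lambda>s. c * f s) = (\<lambda>s. c * Top a f s)"
  by (auto simp: Top_def Jop_mult algebra_simps)

lemma Tseq_add: "LI f \<Longrightarrow> LI g \<Longrightarrow> Tseq xs (\<lambda>s. f s + g s) = (\<lambda>s. Tseq xs f s + Tseq xs g s)"
  by (induction xs) (auto simp: Top_add LI_Tseq)

lemma Tseq_mult: "Tseq xs (\<lambda>s. c * f s) = (\<lambda>s. c * Tseq xs f s)"
  by (induction xs) (auto simp: Top_mult)

lemma Tseq_zero: "Tseq xs (\<lambda>s. 0) = (\<lambda>s. 0)"
  by (induction xs) (auto simp: Top_def Jop_zero)

lemma Tseq_sum: "finite S \<Longrightarrow> (\<And>i. i \<in> S \<Longrightarrow> LI (f i)) \<Longrightarrow>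
   Tseq xs (\<lambda>s. \<Sum>i\<in>S. f i s) = (\<lambda>s. \<Sum>i\<in>S. Tseq xs (f i) s)"
proof (induction S rule: finite_induct)
  case empty then show ?case by (simp add: Tseq_zero)
next
  case (insert x F)
  have ih: "Tseq xs (\<lambda>s. \<Sum>i\<in>F. f i s) = (\<lambda>s. \<Sum>i\<in>F. Tseq xs (f i) s)"
    using insert.IH insert.prems by blast
  have e1: "(\<lambda>s. \<Sum>i\<in>insert x F. f i s) = (\<lambda>s. f x s + (\<Sum>i\<in>F. f i s))"
    using insert.hyps by (simp add: sum.insert)
  have e2: "(\<lambda>s. \<Sum>i\<in>insert x F. Tseq xs (f i) s) = (\<lambda>s. Tseq xs (f x) s + (\<Sum>i\<in>F. Tseq xs (f i) s))"
    using insert.hyps by (simp add: sum.insert)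
  have "Tseq xs (\<lambda>s. f x s + (\<Sum>i\<in>F. f i s)) = (\<lambda>s. Tseq xs (f x) s + Tseq xs (\<lambda>s. \<Sum>i\<in>F. f i s) s)"
    using insert.prems insert.hyps by (intro Tseq_add LI_sum) auto
  then show ?case unfolding e1 e2 ih .
qed

lemma Top_cong: "(\<And>s. s \<ge> 0 \<Longrightarrow> f s = g s) \<Longrightarrow> t \<ge> 0 \<Longrightarrow> Top a f t = Top a g t"
  unfolding Top_def using Jop_cong[of f g t] by simp

lemma Tseq_cong: "(\<And>s. s \<ge> 0 \<Longrightarrow> f s = g s) \<Longrightarrow> t \<ge> 0 \<Longrightarrow> Tseq xs f t = Tseq xs g t"
proof (induction xs arbitrary: t)
  case Nil then show ?case by simp
next
  case (Cons a xs)
  have h: "Tseq xs f s = Tseq xs g s" if "s \<ge> 0" for s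
    using Cons.IH[OF Cons.prems(1) that] .
  show ?case using Top_cong[of "Tseq xs f" "Tseq xs g" t a, OF h Cons.prems(2)] by simp
qed

lemma Tseq_zero_on: assumes "\<And>s. s \<ge> 0 \<Longrightarrow> f s = 0" "t \<ge> 0" shows "Tseq xs f t = 0"
proof -
  have "Tseq xs f t = Tseq xs (\<lambda>s. 0) t" using Tseq_cong[of f "\<lambda>s. 0" t xs] assms by blast
  then show ?thesis by (simp add: Tseq_zero)
qed

lemma Tseq_diff: assumes "LI f" "LI g"
  shows "Tseq xs (\<lambda>s. f s - g s) = (\<lambda>s. Tseq xs f s - Tseq xs g s)"
proof -
  have e: "Tseq xs (\<lambda>s. (-1) * g s) = (\<lambda>s. (-1) * Tseq xs g s)" by (rule Tseq_mult)
  have "Tseq xs (\<lambda>s. f s - g s) = Tseq xs (\<lambda>s. f s + (-1) * g s)" by simp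
  also have "\<dots> = (\<lambda>s. Tseq xs f s + Tseq xs (\<lambda>s. (-1) * g s) s)"
    using assms by (intro Tseq_add LI_mult)
  also have "\<dots> = (\<lambda>s. Tseq xs f s - Tseq xs g s)" unfolding e by simp
  finally show ?thesis .
qed

lemma undir_sym: "(x, y) \<in> (undir X)\<^sup>* \<Longrightarrow> (y, x) \<in> (undir X)\<^sup>*"
proof -
  assume "(x, y) \<in> (undir X)\<^sup>*"
  then have "(y, x) \<in> ((undir X)\<inverse>)\<^sup>*" by (rule rtrancl_converseI)
  moreover have "(undir X)\<inverse> = undir X" unfolding undir_def by auto
  ultimately show ?thesis by simp
qed

definition side :: "(nat \<times> nat) set \<Rightarrow> nat \<times> nat \<Rightarrow> nat \<Rightarrow> bool" where
  "side E e v \<longleftrightarrow> (snd e, v) \<in> (undir (E - {e}))\<^sup>*"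

lemma side_edge: assumes "is_tree V E" "(i, j) \<in> E"
  shows "side E (i, j) j" "\<not> side E (i, j) i"
proof -
  show "side E (i, j) j" unfolding side_def by simp
  show "\<not> side E (i, j) i"
  proof
    assume "side E (i, j) i"
    then have "(i, j) \<in> (undir (E - {(i, j)}))\<^sup>*" unfolding side_def by (auto intro: undir_sym)
    then show False using assms unfolding is_tree_def by blast
  qed
qed

lemma side_other: assumes "(i, j) \<in> E" "e \<noteq> (i, j)"
  shows "side E e i \<longleftrightarrow> side E e j"
proof -
  have "(i, j) \<in> undir (E - {e})" using assms unfolding undir_def by auto
  then have 1: "(i, j) \<in> (undir (E - {e}))\<^sup>*" by auto
  then have 2: "(j, i) \<in> (undir (E - {e}))\<^sup>*" by (rule undir_sym)
  show ?thesis unfolding side_def using 1 2 rtrancl_trans by metis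
qed

lemma side_set: assumes "is_tree V E" "(i, j) \<in> E"
  shows "{e \<in> E. side E e j} = insert (i, j) {e \<in> E. side E e i}"
    "(i, j) \<notin> {e \<in> E. side E e i}"
proof -
  have o: "\<forall>e\<in>E. e \<noteq> (i, j) \<longrightarrow> (side E e i \<longleftrightarrow> side E e j)"
    using side_other[OF assms(2)] by blast
  show "{e \<in> E. side E e j} = insert (i, j) {e \<in> E. side E e i}"
  proof (rule set_eqI)
    fix e
    show "e \<in> {e \<in> E. side E e j} \<longleftrightarrow> e \<in> insert (i, j) {e \<in> E. side E e i}"
    proof (cases "e = (i, j)")
      case True then show ?thesis using side_edge[OF assms] assms(2) by simp
    next
      case False then show ?thesis using o by auto
    qed
  qed
  show "(i, j) \<notin> {e \<in> E. side E e i}"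
    using side_edge[OF assms] by blast
qed

definition elist :: "(nat \<times> nat) set \<Rightarrow> (nat \<times> nat) list" where
  "elist S = (SOME xs. distinct xs \<and> set xs = S)"

lemma elist: "finite S \<Longrightarrow> distinct (elist S) \<and> set (elist S) = S"
  unfolding elist_def by (rule someI_ex) (metis finite_distinct_list)

lemma mset_elist: "finite S \<Longrightarrow> mset (elist S) = mset_set S"
  using elist by (metis mset_set_set)

definition mlist :: "(nat \<times> nat) set \<Rightarrow> (nat \<Rightarrow> nat \<Rightarrow> real) \<Rightarrow> nat \<Rightarrow> real list" where
  "mlist E \<mu> v = map (\<lambda>e. \<mu> (fst e) (snd e)) (elist {e \<in> E. side E e v})"

lemma mlist_mset: assumes "is_tree V E" "(i, j) \<in> E" "finite E"
  shows "mset (mlist E \<mu> j) = mset (mlist E \<mu> i @ [\<mu> i j])"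
proof -
  have f: "finite {e \<in> E. side E e i}" using assms(3) by auto
  show ?thesis
    using side_set(2)[OF assms(1,2)] f unfolding mlist_def mset_map
    by (simp add: mset_elist side_set(1)[OF assms(1,2)])
qed

lemma mlist_set: "set (mlist E \<mu> v) \<subseteq> {\<mu> a b |a b. (a, b) \<in> E}" if "finite E"
  unfolding mlist_def using that elist[of "{e \<in> E. side E e v}"] by (auto; blast)

lemma mset_upt_filter: assumes "i \<in> {1..n}"
  shows "mset (map g [1..<n+1]) = mset (map g (filter (\<lambda>i'. i' \<noteq> i) [1..<n+1]) @ [g i])"
proof -
  have "i \<in> set [1..<n+1]" using assms by auto
  then obtain xs ys where xs: "[1..<n+1] = xs @ i # ys" by (meson split_list)
  have "distinct (xs @ i # ys)" by (metis xs distinct_upt)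
  then have "i \<notin> set xs" "i \<notin> set ys" by auto
  then have "filter (\<lambda>i'. i' \<noteq> i) xs = xs" "filter (\<lambda>i'. i' \<noteq> i) ys = ys"
    by (auto intro!: filter_True)
  then have "filter (\<lambda>i'. i' \<noteq> i) (xs @ i # ys) = xs @ ys" by simp
  then show ?thesis unfolding xs by simp
qed


theorem theorem2:
  fixes nI nJ :: nat
    and E :: "(nat \<times> nat) set"
    and \<mu> :: "nat \<Rightarrow> nat \<Rightarrow> real"
    and \<theta> :: "nat \<Rightarrow> real"
    and w y :: "nat \<Rightarrow> real \<Rightarrow> real"
    and z :: "nat \<Rightarrow> real \<Rightarrow> real"
    and \<psi> :: "nat \<Rightarrow> nat \<Rightarrow> real \<Rightarrow> real"
  defines "Is \<equiv> {1..nI}" and "Js \<equiv> {nI+1..nI+nJ}"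
  assumes E_sub: "E \<subseteq> Is \<times> Js"
    and tree: "is_tree (Is \<union> Js) E"
    and mu_pos: "\<And>i j. (i, j) \<in> E \<Longrightarrow> \<mu> i j > 0"
    and mu_zero: "\<And>i j. (i, j) \<notin> E \<Longrightarrow> \<mu> i j = 0"
    and theta_nonneg: "\<And>i. i \<in> Is \<Longrightarrow> \<theta> i \<ge> 0"
    and w_reg: "\<And>i. i \<in> Is \<Longrightarrow> meas_locbdd (w i)"
    and y_reg: "\<And>i. i \<in> Is \<Longrightarrow> meas_locbdd (y i)"
    and z_reg: "\<And>j. j \<in> Js \<Longrightarrow> meas_locbdd (z j)"
    and psi_reg: "\<And>i j. i \<in> Is \<Longrightarrow> j \<in> Js \<Longrightarrow> meas_locbdd (\<psi> i j)"
    and psi_zero: "\<And>i j t. i \<in> Is \<Longrightarrow> j \<in> Js \<Longrightarrow> (i, j) \<notin> E \<Longrightarrow> \<psi> i j t = 0"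
    and eq_I: "\<And>i t. i \<in> Is \<Longrightarrow> t \<ge> 0 \<Longrightarrow>
        (\<Sum>j\<in>Js. Top (\<mu> i j) (\<psi> i j) t) = w i t - Top (\<theta> i) (y i) t"
    and eq_J: "\<And>j t. j \<in> Js \<Longrightarrow> t \<ge> 0 \<Longrightarrow> (\<Sum>i\<in>Is. \<psi> i j t) = - z j t"
  shows "(\<exists>A B :: nat \<Rightarrow> real list.
            (\<forall>i\<in>Is. set (A i) \<subseteq> {\<mu> a b |a b. (a, b) \<in> E})
          \<and> (\<forall>j\<in>Js. set (B j) \<subseteq> {\<mu> a b |a b. (a, b) \<in> E})
          \<and> (\<forall>t\<ge>0. (\<Sum>i\<in>Is. Tseq (A i) (w i) t) - (\<Sum>i\<in>Is. Tseq (A i @ [\<theta> i]) (y i) t)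
                     + (\<Sum>j\<in>Js. Tseq (B j) (z j) t) = 0))
       \<and> (\<forall>\<mu>J :: nat \<Rightarrow> real.
            (\<forall>(i, j)\<in>E. \<mu> i j = \<mu>J j) \<and> (\<forall>i\<in>Is. \<theta> i = 0) \<longrightarrow>
            (\<forall>t\<ge>0. (\<Sum>i\<in>Is. w i t - y i t) + (\<Sum>j\<in>Js. Top (\<mu>J j) (z j) t) = 0))
       \<and> (\<forall>\<mu>I :: nat \<Rightarrow> real.
            (\<forall>(i, j)\<in>E. \<mu> i j = \<mu>I i) \<and> (\<forall>i\<in>Is. \<theta> i = 0) \<longrightarrow>
            (\<forall>t\<ge>0. (\<Sum>i\<in>Is. Tseq (map \<mu>I (filter (\<lambda>i'. i' \<noteq> i) [1..<nI+1]))
                                    (\<lambda>s. w i s - y i s) t)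
                     + Tseq (map \<mu>I [1..<nI+1]) (\<lambda>s. \<Sum>j\<in>Js. z j s) t = 0))"
proof -
  have finI: "finite Is" and finJ: "finite Js" unfolding Is_def Js_def by auto
  have finE: "finite E" using E_sub finI finJ by (meson finite_SigmaI finite_subset)
  have Lw: "\<And>i. i \<in> Is \<Longrightarrow> LI (w i)" using w_reg meas_locbdd_LI by blast
  have Ly: "\<And>i. i \<in> Is \<Longrightarrow> LI (y i)" using y_reg meas_locbdd_LI by blast
  have Lz: "\<And>j. j \<in> Js \<Longrightarrow> LI (z j)" using z_reg meas_locbdd_LI by blast
  have Lp: "\<And>i j. i \<in> Is \<Longrightarrow> j \<in> Js \<Longrightarrow> LI (\<psi> i j)" using psi_reg meas_locbdd_LI by blast
  have Top_zero_on: "Top a (\<psi> i j) t = 0" if "i \<in> Is" "j \<in> Js" "(i, j) \<notin> E" "t \<ge> 0" for a i j t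
    using Tseq_zero_on[of "\<psi> i j" t "[a]"] psi_zero that by simp
  have Top_sum: "Top a (\<lambda>s. \<Sum>i\<in>S. f i s) = (\<lambda>s. \<Sum>i\<in>S. Top a (f i) s)"
    if "finite S" "\<And>i. i \<in> S \<Longrightarrow> LI (f i)" for a S and f :: "nat \<Rightarrow> real \<Rightarrow> real"
    using Tseq_sum[OF that, where xs="[a]"] by simp
  define A where "A = mlist E \<mu>"
  have part1: "\<forall>t\<ge>0. (\<Sum>i\<in>Is. Tseq (A i) (w i) t) - (\<Sum>i\<in>Is. Tseq (A i @ [\<theta> i]) (y i) t)
                     + (\<Sum>j\<in>Js. Tseq (A j) (z j) t) = 0"
  proof (intro allI impI)
    fix t :: real assume t: "t \<ge> 0"
    have "(\<Sum>i\<in>Is. Tseq (A i) (w i) t) - (\<Sum>i\<in>Is. Tseq (A i @ [\<theta> i]) (y i) t)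
        = (\<Sum>i\<in>Is. Tseq (A i) (w i) t - Tseq (A i) (Top (\<theta> i) (y i)) t)"
      by (simp add: Tseq_append sum_subtractf)
    also have "\<dots> = (\<Sum>i\<in>Is. Tseq (A i) (\<lambda>s. w i s - Top (\<theta> i) (y i) s) t)"
      using Lw Ly LI_Top by (auto intro!: sum.cong simp: Tseq_diff)
    also have "\<dots> = (\<Sum>i\<in>Is. Tseq (A i) (\<lambda>s. \<Sum>j\<in>Js. Top (\<mu> i j) (\<psi> i j) s) t)"
      using eq_I t by (intro sum.cong refl Tseq_cong) auto
    also have "\<dots> = (\<Sum>i\<in>Is. \<Sum>j\<in>Js. Tseq (A i @ [\<mu> i j]) (\<psi> i j) t)"
      using Lp LI_Top finJ by (auto intro!: sum.cong simp: Tseq_sum Tseq_append)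
    also have "\<dots> = (\<Sum>i\<in>Is. \<Sum>j\<in>Js. Tseq (A j) (\<psi> i j) t)"
    proof (intro sum.cong refl)
      fix i j assume ij: "i \<in> Is" "j \<in> Js"
      show "Tseq (A i @ [\<mu> i j]) (\<psi> i j) t = Tseq (A j) (\<psi> i j) t"
      proof (cases "(i, j) \<in> E")
        case True
        then show ?thesis unfolding A_def
          using Tseq_mset[OF Lp[OF ij] mlist_mset[OF tree True finE, of \<mu>]] by simp
      next
        case False
        then show ?thesis using Tseq_zero_on[of "\<psi> i j" t] psi_zero ij t by metis
      qed
    qed
    also have "\<dots> = (\<Sum>j\<in>Js. \<Sum>i\<in>Is. Tseq (A j) (\<psi> i j) t)" by (rule sum.swap)
    also have "\<dots> = (\<Sum>j\<in>Js. Tseq (A j) (\<lambda>s. \<Sum>i\<in>Is. \<psi> i j s) t)"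
      using Lp finI by (auto intro!: sum.cong simp: Tseq_sum)
    also have "\<dots> = (\<Sum>j\<in>Js. Tseq (A j) (\<lambda>s. (-1) * z j s) t)"
      using eq_J t by (intro sum.cong refl Tseq_cong) auto
    also have "\<dots> = - (\<Sum>j\<in>Js. Tseq (A j) (z j) t)"
      unfolding Tseq_mult by (simp add: sum_negf)
    finally show "(\<Sum>i\<in>Is. Tseq (A i) (w i) t) - (\<Sum>i\<in>Is. Tseq (A i @ [\<theta> i]) (y i) t)
                     + (\<Sum>j\<in>Js. Tseq (A j) (z j) t) = 0" by simp
  qed
  have part2: "(\<forall>(i, j)\<in>E. \<mu> i j = \<mu>J j) \<and> (\<forall>i\<in>Is. \<theta> i = 0) \<longrightarrow>
            (\<forall>t\<ge>0. (\<Sum>i\<in>Is. w i t - y i t) + (\<Sum>j\<in>Js. Top (\<mu>J j) (z j) t) = 0)" for \<mu>J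
  proof (intro impI allI)
    fix t :: real assume H: "(\<forall>(i, j)\<in>E. \<mu> i j = \<mu>J j) \<and> (\<forall>i\<in>Is. \<theta> i = 0)" and t: "t \<ge> 0"
    have "(\<Sum>i\<in>Is. w i t - y i t) = (\<Sum>i\<in>Is. \<Sum>j\<in>Js. Top (\<mu> i j) (\<psi> i j) t)"
      using eq_I t H by (auto intro!: sum.cong simp: Top_def)
    also have "\<dots> = (\<Sum>i\<in>Is. \<Sum>j\<in>Js. Top (\<mu>J j) (\<psi> i j) t)"
    proof (intro sum.cong refl)
      fix i j assume ij: "i \<in> Is" "j \<in> Js"
      show "Top (\<mu> i j) (\<psi> i j) t = Top (\<mu>J j) (\<psi> i j) t"
        using H Top_zero_on[OF ij _ t] by (cases "(i, j) \<in> E") auto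
    qed
    also have "\<dots> = (\<Sum>j\<in>Js. \<Sum>i\<in>Is. Top (\<mu>J j) (\<psi> i j) t)" by (rule sum.swap)
    also have "\<dots> = (\<Sum>j\<in>Js. Top (\<mu>J j) (\<lambda>s. \<Sum>i\<in>Is. \<psi> i j s) t)"
      using Lp finI by (auto intro!: sum.cong simp: Top_sum)
    also have "\<dots> = (\<Sum>j\<in>Js. Top (\<mu>J j) (\<lambda>s. (-1) * z j s) t)"
      using eq_J t by (intro sum.cong refl Top_cong) auto
    also have "\<dots> = - (\<Sum>j\<in>Js. Top (\<mu>J j) (z j) t)"
      unfolding Top_mult by (simp add: sum_negf)
    finally show "(\<Sum>i\<in>Is. w i t - y i t) + (\<Sum>j\<in>Js. Top (\<mu>J j) (z j) t) = 0" by simp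
  qed
  have part3: "(\<forall>(i, j)\<in>E. \<mu> i j = \<mu>I i) \<and> (\<forall>i\<in>Is. \<theta> i = 0) \<longrightarrow>
            (\<forall>t\<ge>0. (\<Sum>i\<in>Is. Tseq (map \<mu>I (filter (\<lambda>i'. i' \<noteq> i) [1..<nI+1]))
                                    (\<lambda>s. w i s - y i s) t)
                     + Tseq (map \<mu>I [1..<nI+1]) (\<lambda>s. \<Sum>j\<in>Js. z j s) t = 0)" for \<mu>I
  proof (intro impI allI)
    fix t :: real assume H: "(\<forall>(i, j)\<in>E. \<mu> i j = \<mu>I i) \<and> (\<forall>i\<in>Is. \<theta> i = 0)" and t: "t \<ge> 0"
    define M where "M = map \<mu>I [1..<nI+1]"
    define Mi where "Mi i = map \<mu>I (filter (\<lambda>i'. i' \<noteq> i) [1..<nI+1])" for i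
    define Psi where "Psi i s = (\<Sum>j\<in>Js. \<psi> i j s)" for i s
    have LPsi: "LI (Psi i)" if "i \<in> Is" for i
      unfolding Psi_def[abs_def] using that Lp finJ by (intro LI_sum) auto
    have wy: "w i s - y i s = Top (\<mu>I i) (Psi i) s" if "i \<in> Is" "s \<ge> 0" for i s
    proof -
      have "w i s - y i s = (\<Sum>j\<in>Js. Top (\<mu> i j) (\<psi> i j) s)"
        using eq_I that H by (auto simp: Top_def)
      also have "\<dots> = (\<Sum>j\<in>Js. Top (\<mu>I i) (\<psi> i j) s)"
      proof (intro sum.cong refl)
        fix j assume j: "j \<in> Js"
        show "Top (\<mu> i j) (\<psi> i j) s = Top (\<mu>I i) (\<psi> i j) s"
          using H Top_zero_on[OF that(1) j _ that(2)] by (cases "(i, j) \<in> E") auto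
      qed
      also have "\<dots> = Top (\<mu>I i) (Psi i) s"
        unfolding Psi_def[abs_def] using Lp that finJ by (simp add: Top_sum)
      finally show ?thesis .
    qed
    have "(\<Sum>i\<in>Is. Tseq (Mi i) (\<lambda>s. w i s - y i s) t) = (\<Sum>i\<in>Is. Tseq (Mi i) (Top (\<mu>I i) (Psi i)) t)"
      using wy t by (intro sum.cong refl Tseq_cong) auto
    also have "\<dots> = (\<Sum>i\<in>Is. Tseq M (Psi i) t)"
    proof (intro sum.cong refl)
      fix i assume i: "i \<in> Is"
      have "mset M = mset (Mi i @ [\<mu>I i])"
        unfolding M_def Mi_def using mset_upt_filter i unfolding Is_def by blast
      then have "Tseq M (Psi i) = Tseq (Mi i @ [\<mu>I i]) (Psi i)"
        using Tseq_mset[OF LPsi[OF i]] by blast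
      then show "Tseq (Mi i) (Top (\<mu>I i) (Psi i)) t = Tseq M (Psi i) t"
        by (simp add: Tseq_append)
    qed
    also have "\<dots> = Tseq M (\<lambda>s. \<Sum>i\<in>Is. Psi i s) t"
      using LPsi finI by (simp add: Tseq_sum)
    also have "\<dots> = Tseq M (\<lambda>s. (-1) * (\<Sum>j\<in>Js. z j s)) t"
    proof (rule Tseq_cong[OF _ t])
      fix s :: real assume s: "s \<ge> 0"
      have "(\<Sum>i\<in>Is. Psi i s) = (\<Sum>j\<in>Js. \<Sum>i\<in>Is. \<psi> i j s)"
        unfolding Psi_def by (rule sum.swap)
      also have "\<dots> = (\<Sum>j\<in>Js. - z j s)" using eq_J s by simp
      finally show "(\<Sum>i\<in>Is. Psi i s) = (-1) * (\<Sum>j\<in>Js. z j s)" by (simp add: sum_negf)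
    qed
    also have "\<dots> = - Tseq M (\<lambda>s. \<Sum>j\<in>Js. z j s) t" unfolding Tseq_mult by simp
    finally show "(\<Sum>i\<in>Is. Tseq (map \<mu>I (filter (\<lambda>i'. i' \<noteq> i) [1..<nI+1]))
                                    (\<lambda>s. w i s - y i s) t)
                     + Tseq (map \<mu>I [1..<nI+1]) (\<lambda>s. \<Sum>j\<in>Js. z j s) t = 0"
      unfolding M_def Mi_def by simp
  qed
  have "\<forall>i\<in>Is. set (A i) \<subseteq> {\<mu> a b |a b. (a, b) \<in> E}" "\<forall>j\<in>Js. set (A j) \<subseteq> {\<mu> a b |a b. (a, b) \<in> E}"
    unfolding A_def using mlist_set[OF finE] by auto
  then show ?thesis using part1 part2 part3 by blast
qed

end
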